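(* Let $k\ge 0$. (1) If $\pi$ is a permutation with exactly $k$ descents, then $f(\pi)\in\widehat{\mathcal{A}}_{k+1}$. (2) If $w\in\widehat{\mathcal{A}}_{k+1}$, then $g(w)$ is a permutation with exactly $k$ descents.
   Context: A permutation of length $n\ge1$ is a word $\pi=\pi_1\cdots\pi_n$ containing each of $1,\dots,n$ exactly once. A descent of $\pi$ is an index $i$ with $\pi_i>\pi_{i+1}$. A run of $\pi$ is a maximal consecutive increasing sequence of letters; for a letter $c$ of $\pi$, $d_\pi(c)$ denotes the index of the run containing $c$, i.e. $1$ plus the number of descents at indices before the position of $c$. Words are finite sequences over the positive integers; $\max(w)$ is the largest letter of $w$. $\widehat{\mathcal{A}}$ is the set of words $w$ such that (AC1) every $i\in\{1,\dots,\max(w)\}$ occurs in $w$, and (AC2) for every $i\in\{1,\dots,\max(w)-1\}$, the rightmost occurrence of $i$ in $w$ is preceded (somewhere to its left) by an occurrence of $i+1$. $\widehat{\mathcal{A}}_k$ is the set of $w\in\widehat{\mathcal{A}}$ with $\max(w)=k$. For a word $w$ and letter $j$, $p_w(j)$ is the list of positions $i$ with $w_i=j$, in increasing order. Define $f(\pi)=d_\pi(1)d_\pi(2)\cdots d_\pi(n)$ for a permutation $\pi$ of length $n$, and $g(w)$ to be the concatenation $p_w(1)p_w(2)\cdots p_w(\max(w))$ for $w\in\widehat{\mathcal{A}}$. (Example: $f(263415)=312231$, $g(214321)=261543$.) *)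

theory Defs
  imports Main
begin

text \<open>Words are lists of positive naturals; positions are 1-based in the paper,
  here list indices are 0-based and we shift explicitly.\<close>

definition is_perm :: "nat list \<Rightarrow> bool" where
  "is_perm \<pi> \<longleftrightarrow> length \<pi> \<ge> 1 \<and> distinct \<pi> \<and> set \<pi> = {1..length \<pi>}"

text \<open>Descent at (1-based) index i+1 means \<pi>!i > \<pi>!(i+1) with 0-based i.\<close>
definition descents :: "nat list \<Rightarrow> nat set" where
  "descents \<pi> = {i. Suc i < length \<pi> \<and> \<pi> ! i > \<pi> ! Suc i}"

definition num_descents :: "nat list \<Rightarrow> nat" where
  "num_descents \<pi> = card (descents \<pi>)"

definition pos :: "nat list \<Rightarrow> nat \<Rightarrow> nat" where
  "pos \<pi> c = (LEAST i. i < length \<pi> \<and> \<pi> ! i = c)"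

definition run_index :: "nat list \<Rightarrow> nat \<Rightarrow> nat" where
  "run_index \<pi> c = 1 + card {i \<in> descents \<pi>. i < pos \<pi> c}"

definition f_map :: "nat list \<Rightarrow> nat list" where
  "f_map \<pi> = map (run_index \<pi>) [1..<length \<pi> + 1]"

definition maxw :: "nat list \<Rightarrow> nat" where
  "maxw w = Max (set w)"

definition rightmost :: "nat list \<Rightarrow> nat \<Rightarrow> nat" where
  "rightmost w i = (GREATEST j. j < length w \<and> w ! j = i)"

definition in_Ahat :: "nat list \<Rightarrow> bool" where
  "in_Ahat w \<longleftrightarrow> w \<noteq> [] \<and> (\<forall>x \<in> set w. x \<ge> 1)
     \<and> (\<forall>i \<in> {1..maxw w}. i \<in> set w)
     \<and> (\<forall>i \<in> {1..<maxw w}. \<exists>j < rightmost w i. w ! j = i + 1)"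

definition in_Ahat_k :: "nat \<Rightarrow> nat list \<Rightarrow> bool" where
  "in_Ahat_k k w \<longleftrightarrow> in_Ahat w \<and> maxw w = k"

definition positions :: "nat list \<Rightarrow> nat \<Rightarrow> nat list" where
  "positions w j = filter (\<lambda>i. w ! (i - 1) = j) [1..<length w + 1]"

definition g_map :: "nat list \<Rightarrow> nat list" where
  "g_map w = concat (map (positions w) [1..<maxw w + 1])"

end

theory Submission
  imports Defs
begin

lemma finite_desc: "finite (descents \<pi>)"
proof -
  have "descents \<pi> \<subseteq> {..< length \<pi>}" unfolding descents_def by auto
  then show ?thesis using finite_subset by blast
qed

definition DD where "DD \<pi> p = card {i \<in> descents \<pi>. i < p}"

lemma DD_Suc: "DD \<pi> (Suc s) = DD \<pi> s + (if s \<in> descents \<pi> then 1 else 0)"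
proof (cases "s \<in> descents \<pi>")
  case True
  have "{i \<in> descents \<pi>. i < Suc s} = insert s {i \<in> descents \<pi>. i < s}" using True by auto
  moreover have "finite {i \<in> descents \<pi>. i < s}" using finite_desc by auto
  ultimately show ?thesis unfolding DD_def using True by simp
next
  case False
  have "{i \<in> descents \<pi>. i < Suc s} = {i \<in> descents \<pi>. i < s}" using False less_Suc_eq by auto
  then show ?thesis unfolding DD_def using False by simp
qed

lemma DD_le: "DD \<pi> p \<le> num_descents \<pi>"
  unfolding DD_def num_descents_def by (rule card_mono) (use finite_desc in auto)

lemma DD_last: "DD \<pi> (length \<pi> - 1) = num_descents \<pi>"
proof -
  have "{i \<in> descents \<pi>. i < length \<pi> - 1} = descents \<pi>" unfolding descents_def by auto
  then show ?thesis unfolding DD_def num_descents_def by simp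
qed

lemma DD_step: "0 < v \<Longrightarrow> v \<le> DD \<pi> N \<Longrightarrow> \<exists>s<N. DD \<pi> s = v - 1 \<and> s \<in> descents \<pi>"
proof (induction N)
  case 0
  then show ?case by (simp add: DD_def)
next
  case (Suc N)
  show ?case
  proof (cases "v \<le> DD \<pi> N")
    case True
    then show ?thesis using Suc by (meson less_SucI)
  next
    case False
    have h: "DD \<pi> (Suc N) = DD \<pi> N + (if N \<in> descents \<pi> then 1 else 0)" by (rule DD_Suc)
    then have "N \<in> descents \<pi>" "DD \<pi> N = v - 1" using False Suc.prems by (auto split: if_splits)
    then show ?thesis by blast
  qed
qed

lemma pos_nth: "distinct \<pi> \<Longrightarrow> p < length \<pi> \<Longrightarrow> pos \<pi> (\<pi>!p) = p"
  unfolding pos_def by (rule Least_equality) (auto simp: nth_eq_iff_index_eq)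

lemma run_nth: "distinct \<pi> \<Longrightarrow> p < length \<pi> \<Longrightarrow> run_index \<pi> (\<pi>!p) = 1 + DD \<pi> p"
  unfolding run_index_def DD_def by (simp add: pos_nth)

lemma rm_le: "j < length w \<Longrightarrow> w!j = x \<Longrightarrow> j \<le> rightmost w x"
  unfolding rightmost_def by (rule Greatest_le_nat[where b="length w"]) auto

lemma rm_prop: "x \<in> set w \<Longrightarrow> rightmost w x < length w \<and> w!(rightmost w x) = x"
proof -
  assume "x \<in> set w"
  then obtain j where "j < length w" "w!j = x" by (auto simp: in_set_conv_nth)
  then show ?thesis unfolding rightmost_def
    by (rule_tac GreatestI_nat[where b="length w"]) auto
qed

lemma f_len: "length (f_map \<pi>) = length \<pi>" by (simp add: f_map_def del: upt_Suc)
lemma f_nth: "j < length \<pi> \<Longrightarrow> f_map \<pi> ! j = run_index \<pi> (Suc j)"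
  unfolding f_map_def by (simp del: upt_Suc)

lemma f_set:
  assumes "is_perm \<pi>"
  shows "set (f_map \<pi>) = (\<lambda>p. 1 + DD \<pi> p) ` {..<length \<pi>}"
proof -
  have d: "distinct \<pi>" and s: "set \<pi> = {1..length \<pi>}" using assms by (auto simp: is_perm_def)
  have "set (f_map \<pi>) = run_index \<pi> ` {1..<length \<pi> + 1}"
    by (simp only: f_map_def set_map set_upt)
  also have "{1..<length \<pi> + 1} = set \<pi>" unfolding s by (rule atLeastLessThanSuc_atLeastAtMost[unfolded Suc_eq_plus1])
  also have "set \<pi> = (!) \<pi> ` {..<length \<pi>}" unfolding set_conv_nth by blast
  also have "run_index \<pi> ` ((!) \<pi> ` {..<length \<pi>}) = (\<lambda>p. 1 + DD \<pi> p) ` {..<length \<pi>}"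
    unfolding image_image using run_nth[OF d] by (intro image_cong) auto
  finally show ?thesis .
qed

lemma num_sorted: "sorted_wrt (<) xs \<Longrightarrow> num_descents xs = 0"
proof -
  assume a: "sorted_wrt (<) xs"
  have lt: "xs!i < xs!Suc i" if "Suc i < length xs" for i using sorted_wrt_nth_less[OF a, of i "Suc i"] that by simp
  have "descents xs = {}"
  proof (rule ccontr)
    assume "descents xs \<noteq> {}"
    then obtain i where "Suc i < length xs" "xs!i > xs!Suc i" by (auto simp: descents_def)
    then show False using lt[of i] by simp
  qed
  then show ?thesis by (simp add: num_descents_def)
qed
lemma num_snoc: "num_descents (xs @ [y]) = num_descents xs + (if xs \<noteq> [] \<and> last xs > y then 1 else 0)"
proof -
  let ?E = "(if xs \<noteq> [] \<and> last xs > y then {length xs - 1} else {})"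
  have eq: "descents (xs @ [y]) = descents xs \<union> ?E"
  proof (intro set_eqI iffI)
    fix i assume "i \<in> descents (xs @ [y])"
    then have a: "Suc i < length xs + 1" "(xs@[y])!i > (xs@[y])!Suc i" by (auto simp: descents_def)
    show "i \<in> descents xs \<union> ?E"
    proof (cases "Suc i < length xs")
      case True then show ?thesis using a by (simp add: descents_def nth_append)
    next
      case False
      then have e: "Suc i = length xs" using a by simp
      then have ne: "xs \<noteq> []" and ii: "i = length xs - 1" by auto
      have "(xs@[y])!i = last xs" using e ii by (simp add: nth_append last_conv_nth[OF ne])
      moreover have "(xs@[y])!Suc i = y" using e by (simp add: nth_append)
      moreover note ne ii
      ultimately show ?thesis using a by simp
    qed
  next
    fix i assume h: "i \<in> descents xs \<union> ?E"
    show "i \<in> descents (xs @ [y])"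
    proof (cases "i \<in> descents xs")
      case True then show ?thesis by (simp add: descents_def nth_append)
    next
      case False
      then have "xs \<noteq> []" "last xs > y" "i = length xs - 1" using h by (auto split: if_splits)
      then show ?thesis by (simp add: descents_def nth_append last_conv_nth)
    qed
  qed
  have "length xs - 1 \<notin> descents xs" by (auto simp: descents_def)
  then show ?thesis unfolding num_descents_def eq using finite_desc[of xs] by auto
qed

lemma num_app: "sorted_wrt (<) ys \<Longrightarrow> xs \<noteq> [] \<Longrightarrow> ys \<noteq> [] \<Longrightarrow>
  num_descents (xs @ ys) = num_descents xs + (if last xs > hd ys then 1 else 0)"
proof (induction ys rule: rev_induct)
  case Nil then show ?case by simp
next
  case (snoc y ys)
  show ?case
  proof (cases "ys = []")
    case True then show ?thesis using snoc num_snoc[of xs y] by simp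
  next
    case False
    have s: "sorted_wrt (<) ys" and lt: "last ys < y" using snoc.prems False
      by (auto simp: sorted_wrt_append)
    have "num_descents (xs @ ys @ [y]) = num_descents (xs @ ys)"
      using num_snoc[of "xs @ ys" y] lt False by simp
    then show ?thesis using snoc.IH[OF s snoc.prems(2) False] False by simp
  qed
qed

lemma sw_hd: "sorted_wrt (<) (xs::nat list) \<Longrightarrow> x \<in> set xs \<Longrightarrow> hd xs \<le> x"
  by (cases xs) auto
lemma sw_last: "sorted_wrt (<) (xs::nat list) \<Longrightarrow> x \<in> set xs \<Longrightarrow> x \<le> last xs"
  by (induction xs) (auto, meson last_in_set less_imp_le)

lemma pos_set: "set (positions w j) = {i. 1 \<le> i \<and> i \<le> length w \<and> w!(i-1) = j}"
  by (auto simp: positions_def)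
lemma pos_sorted: "sorted_wrt (<) (positions w j)"
  unfolding positions_def by (rule sorted_wrt_filter) (rule sorted_wrt_upt)

lemma G_set: "set (concat (map (positions w) [1..<m+1])) = {i. 1 \<le> i \<and> i \<le> length w \<and> w!(i-1) \<in> {1..m}}"
proof (induction m)
  case 0 show ?case by simp
next
  case (Suc m)
  have "set (concat (map (positions w) [1..<Suc m+1])) = set (concat (map (positions w) [1..<m+1])) \<union> set (positions w (Suc m))"
    by simp
  also have "\<dots> = {i. 1 \<le> i \<and> i \<le> length w \<and> w!(i-1) \<in> {1..m}} \<union> {i. 1 \<le> i \<and> i \<le> length w \<and> w!(i-1) = Suc m}"
    using Suc.IH pos_set by simp
  also have "\<dots> = {i. 1 \<le> i \<and> i \<le> length w \<and> w!(i-1) \<in> {1..Suc m}}" by (auto simp: le_Suc_eq)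
  finally show ?case .
qed

lemma part1:
  assumes p: "is_perm \<pi>" and k: "num_descents \<pi> = k"
  shows "in_Ahat_k (k + 1) (f_map \<pi>)"
proof -
  define n where "n = length \<pi>"
  define w where "w = f_map \<pi>"
  have d: "distinct \<pi>" and sp: "set \<pi> = {1..n}" and n1: "n \<ge> 1"
    using p by (auto simp: is_perm_def n_def)
  have sw: "set w = (\<lambda>p. 1 + DD \<pi> p) ` {..<n}" using f_set[OF p] by (simp add: w_def n_def)
  have lw: "length w = n" by (simp add: w_def n_def f_len)
  have last_in: "k + 1 \<in> set w" unfolding sw using DD_last[of \<pi>] k n1 n_def
    by (auto simp: image_iff intro!: bexI[where x="n-1"])
  have mx: "maxw w = k + 1"
    unfolding maxw_def
  proof (rule Max_eqI)
    show "finite (set w)" by simp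
    show "k + 1 \<in> set w" by (rule last_in)
    fix y assume "y \<in> set w" then show "y \<le> k + 1" unfolding sw using DD_le[of \<pi>] k by auto
  qed
  have ne: "w \<noteq> []" using lw n1 by auto
  have ge1: "\<forall>x\<in>set w. x \<ge> 1" unfolding sw by auto
  have occ: "\<forall>i\<in>{1..maxw w}. i \<in> set w"
  proof
    fix i assume "i \<in> {1..maxw w}"
    then have i: "1 \<le> i" "i \<le> k + 1" using mx by auto
    show "i \<in> set w"
    proof (cases "i = k + 1")
      case True then show ?thesis using last_in by simp
    next
      case False
      then have "i \<le> DD \<pi> (n - 1)" using i DD_last[of \<pi>] k n_def by simp
      then obtain s where "s < n - 1" "DD \<pi> s = i - 1" using DD_step[of i \<pi> "n-1"] i by auto
      then show ?thesis unfolding sw using i by (auto simp: image_iff intro!: bexI[where x=s])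
    qed
  qed
  have ac2: "\<forall>i\<in>{1..<maxw w}. \<exists>j < rightmost w i. w ! j = i + 1"
  proof
    fix i assume "i \<in> {1..<maxw w}"
    then have i: "1 \<le> i" "i \<le> k" using mx by auto
    then have "i \<le> DD \<pi> (n - 1)" using DD_last[of \<pi>] k n_def by simp
    then obtain s where s1: "s < n - 1" and s2: "DD \<pi> s = i - 1" and s3: "s \<in> descents \<pi>"
      using DD_step[of i \<pi> "n-1"] i by auto
    have gt: "\<pi>!s > \<pi>!Suc s" using s3 by (simp add: descents_def)
    have "s < length \<pi>" "Suc s < length \<pi>" using s1 n_def by auto
    then have cin: "\<pi>!s \<in> {1..n}" and bin: "\<pi>!Suc s \<in> {1..n}" using sp nth_mem by blast+
    have "w ! (\<pi>!s - 1) = run_index \<pi> (\<pi>!s)"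
    proof -
      have "\<pi>!s - 1 < length \<pi>" "Suc (\<pi>!s - 1) = \<pi>!s" using cin n_def by auto
      then show ?thesis using f_nth[of "\<pi>!s - 1" \<pi>] by (simp add: w_def)
    qed
    also have "\<dots> = i" using run_nth[OF d, of s] s1 s2 i n_def by simp
    finally have "\<pi>!s - 1 \<le> rightmost w i" using rm_le[of "\<pi>!s - 1" w i] cin lw by auto
    moreover have "w ! (\<pi>!Suc s - 1) = run_index \<pi> (\<pi>!Suc s)"
    proof -
      have "\<pi>!Suc s - 1 < length \<pi>" "Suc (\<pi>!Suc s - 1) = \<pi>!Suc s" using bin n_def by auto
      then show ?thesis using f_nth[of "\<pi>!Suc s - 1" \<pi>] by (simp add: w_def)
    qed
    moreover have "run_index \<pi> (\<pi>!Suc s) = i + 1"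
      using run_nth[OF d, of "Suc s"] s1 s2 s3 i n_def DD_Suc[of \<pi> s] by simp
    ultimately show "\<exists>j < rightmost w i. w ! j = i + 1"
      using gt bin by (intro exI[where x="\<pi>!Suc s - 1"]) auto
  qed
  show ?thesis unfolding in_Ahat_k_def in_Ahat_def w_def[symmetric]
    using ne ge1 occ ac2 mx by blast
qed

lemma part2:
  assumes a: "in_Ahat_k (k + 1) w"
  shows "is_perm (g_map w) \<and> num_descents (g_map w) = k"
proof -
  define n where "n = length w"
  define G where "G m = concat (map (positions w) [1..<m+1])" for m
  have mx: "maxw w = k + 1" and A: "in_Ahat w" using a unfolding in_Ahat_k_def by blast+
  have ne: "w \<noteq> []" and ge1: "\<forall>x\<in>set w. x \<ge> 1"
    and occ0: "\<forall>i\<in>{1..maxw w}. i \<in> set w"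
    and ac20: "\<forall>i\<in>{1..<maxw w}. \<exists>j < rightmost w i. w ! j = i + 1"
    using A unfolding in_Ahat_def by blast+
  have occ: "\<forall>i\<in>{1..k+1}. i \<in> set w" using occ0 mx by simp
  have ac2: "\<forall>i\<in>{1..<k+1}. \<exists>j < rightmost w i. w ! j = i + 1" using ac20 mx by simp
  have le: "\<forall>x\<in>set w. x \<le> k + 1" using mx unfolding maxw_def by (metis Max_ge finite_set)
  have gG: "g_map w = G (k+1)" by (simp add: g_map_def G_def mx)
  have GS: "G (Suc m) = G m @ positions w (Suc m)" for m by (simp add: G_def)
  have setG: "set (G m) = {i. 1 \<le> i \<and> i \<le> n \<and> w!(i-1) \<in> {1..m}}" for m
    unfolding G_def n_def by (rule G_set)
  have distG: "distinct (G m)" for m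
  proof (induction m)
    case 0 then show ?case by (simp add: G_def)
  next
    case (Suc m)
    have "distinct (positions w (Suc m))" using pos_sorted strict_sorted_iff by blast
    moreover have "set (G m) \<inter> set (positions w (Suc m)) = {}" by (auto simp: setG pos_set)
    ultimately show ?case using Suc by (simp add: GS)
  qed
  have pne: "positions w j \<noteq> []" if "j \<in> {1..k+1}" for j
  proof -
    have "j \<in> set w" using occ that by blast
    then obtain r where "r < n" "w!r = j" by (auto simp: in_set_conv_nth n_def)
    then have "Suc r \<in> set (positions w j)" by (simp add: pos_set n_def)
    then show ?thesis by auto
  qed
  have bd: "last (positions w m) > hd (positions w (Suc m))" if hm: "1 \<le> m" "m \<le> k" for m
  proof -
    have "m \<in> set w" using occ that by auto
    note r = rm_prop[OF this]
    have "m \<in> {1..<k+1}" using hm by simp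
    then obtain j where j: "j < rightmost w m" "w!j = m + 1" using ac2 by blast
    have "Suc (rightmost w m) \<in> set (positions w m)" using r by (simp add: pos_set)
    then have "Suc (rightmost w m) \<le> last (positions w m)" using sw_last pos_sorted by blast
    moreover have "Suc j \<in> set (positions w (Suc m))" using r j by (simp add: pos_set)
    then have "hd (positions w (Suc m)) \<le> Suc j" using sw_hd pos_sorted by blast
    ultimately show ?thesis using j by simp
  qed
  have main: "1 \<le> m \<longrightarrow> m \<le> k + 1 \<longrightarrow> num_descents (G m) = m - 1 \<and> G m \<noteq> [] \<and> last (G m) = last (positions w m)" for m
  proof (induction m)
    case 0 then show ?case by simp
  next
    case (Suc m)
    show ?case
    proof (intro impI)
      assume h: "1 \<le> Suc m" "Suc m \<le> k + 1"
      have pn: "positions w (Suc m) \<noteq> []" using pne h by simp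
      show "num_descents (G (Suc m)) = Suc m - 1 \<and> G (Suc m) \<noteq> [] \<and> last (G (Suc m)) = last (positions w (Suc m))"
      proof (cases "m = 0")
        case True
        then show ?thesis using pn num_sorted[OF pos_sorted] by (simp add: G_def)
      next
        case False
        then have IH: "num_descents (G m) = m - 1" "G m \<noteq> []" "last (G m) = last (positions w m)"
          using Suc.IH h by auto
        have "num_descents (G (Suc m)) = num_descents (G m) + 1"
          using num_app[OF pos_sorted IH(2) pn] IH(3) bd[of m] False h by (simp add: GS)
        then show ?thesis using IH pn False by (simp add: GS)
      qed
    qed
  qed
  have nd: "num_descents (g_map w) = k" using main[of "k+1"] gG by simp
  have sG: "set (g_map w) = {1..n}"
  proof -
    have "w!(i-1) \<in> {1..k+1}" if "1 \<le> i" "i \<le> n" for i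
    proof -
      have "i - 1 < length w" using that n_def by simp
      then have "w!(i-1) \<in> set w" by (rule nth_mem)
      then show ?thesis using ge1 le by auto
    qed
    then show ?thesis unfolding gG setG by auto
  qed
  have "length (g_map w) = n" using distinct_card[OF distG[of "k+1"]] sG gG by simp
  moreover have "n \<ge> 1" using ne n_def by (cases w) auto
  ultimately have "is_perm (g_map w)" using sG distG gG by (simp add: is_perm_def)
  then show ?thesis using nd by simp
qed

theorem mainTheorem1:
  fixes k :: nat
  shows "(\<forall>\<pi>. is_perm \<pi> \<and> num_descents \<pi> = k \<longrightarrow> in_Ahat_k (k + 1) (f_map \<pi>))
       \<and> (\<forall>w. in_Ahat_k (k + 1) w \<longrightarrow> is_perm (g_map w) \<and> num_descents (g_map w) = k)"
  using part1 part2 by blast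

end
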